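(* Let $S$ be a monoid whose unique maximal right ideal $\mathfrak{M}$ is two-sided, and let $A$ be a right $S$-act having a maximal subact $B$ such that there exists $a\in A\setminus B$ with $\mathfrak{M}=\{s\in S\mid as\in B\}$. Then: (1) for every proper right ideal $I$ of $S$ with $I^2=I$ we have $AI\not\cong A$ (as $S$-acts); (2) for every right ideal $I$ of $S$, $AI=A$ if and only if $I=S$; (3) for every right ideal $I$ of $S$ with $I^2=I$, $AI\cong A$ if and only if $I=S$.
   Context: $S$ is a monoid with identity $1$ having at least one right non-invertible element. A (right) $S$-act is a nonempty set with an action $(a,s)\mapsto as$, $a1=a$, $a(st)=(as)t$; a subact is a nonempty subset closed under the action; a maximal subact is a proper subact not properly contained in another proper subact. $\mathfrak{M}=\{s\in S\mid st\neq1\ \forall t\in S\}$ is the unique maximal right ideal. $AI=\{as\mid a\in A,s\in I\}$ (a subact of $A$), $I^2=\{st\mid s,t\in I\}$. Isomorphism means bijective map $f$ with $f(as)=f(a)s$. *)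

theory Defs
  imports Main
begin

text \<open>A right S-act: a nonempty carrier set A with an action act : 'b => 'a => 'b,
  where S is the whole type 'a (a monoid).\<close>
definition is_act :: "('b \<Rightarrow> 'a::monoid_mult \<Rightarrow> 'b) \<Rightarrow> 'b set \<Rightarrow> bool" where
  "is_act act A \<longleftrightarrow> A \<noteq> {} \<and> (\<forall>a\<in>A. \<forall>s. act a s \<in> A) \<and> (\<forall>a\<in>A. act a 1 = a)
     \<and> (\<forall>a\<in>A. \<forall>s t. act a (s * t) = act (act a s) t)"

definition subact :: "('b \<Rightarrow> 'a::monoid_mult \<Rightarrow> 'b) \<Rightarrow> 'b set \<Rightarrow> 'b set \<Rightarrow> bool" where
  "subact act B A \<longleftrightarrow> B \<noteq> {} \<and> B \<subseteq> A \<and> (\<forall>b\<in>B. \<forall>s. act b s \<in> B)"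

definition maximal_subact :: "('b \<Rightarrow> 'a::monoid_mult \<Rightarrow> 'b) \<Rightarrow> 'b set \<Rightarrow> 'b set \<Rightarrow> bool" where
  "maximal_subact act B A \<longleftrightarrow> subact act B A \<and> B \<noteq> A \<and>
     (\<forall>C. subact act C A \<and> C \<noteq> A \<and> B \<subseteq> C \<longrightarrow> C = B)"

definition right_ideal :: "'a::monoid_mult set \<Rightarrow> bool" where
  "right_ideal I \<longleftrightarrow> I \<noteq> {} \<and> (\<forall>s\<in>I. \<forall>t. s * t \<in> I)"

definition left_ideal :: "'a::monoid_mult set \<Rightarrow> bool" where
  "left_ideal I \<longleftrightarrow> I \<noteq> {} \<and> (\<forall>s\<in>I. \<forall>t. t * s \<in> I)"

text \<open>The set of right non-invertible elements, the unique maximal right ideal.\<close>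
definition maxRI :: "'a::monoid_mult set" where
  "maxRI = {s. \<forall>t. s * t \<noteq> 1}"

definition act_ideal :: "('b \<Rightarrow> 'a::monoid_mult \<Rightarrow> 'b) \<Rightarrow> 'b set \<Rightarrow> 'a set \<Rightarrow> 'b set" where
  "act_ideal act A I = {act a s | a s. a \<in> A \<and> s \<in> I}"

definition ideal_sq :: "'a::monoid_mult set \<Rightarrow> 'a set" where
  "ideal_sq I = {s * t | s t. s \<in> I \<and> t \<in> I}"

definition act_iso :: "('b \<Rightarrow> 'a::monoid_mult \<Rightarrow> 'b) \<Rightarrow> 'b set \<Rightarrow> 'b set \<Rightarrow> bool" where
  "act_iso act X Y \<longleftrightarrow> (\<exists>f. bij_betw f X Y \<and> (\<forall>x\<in>X. \<forall>s. f (act x s) = act (f x) s))"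

end

theory Submission
  imports Defs
begin

theorem proposition3p1:
  fixes act :: "'b \<Rightarrow> 'a::monoid_mult \<Rightarrow> 'b" and A B :: "'b set"
  assumes nonunit: "\<exists>s::'a. \<forall>t. s * t \<noteq> 1"
    and twosided: "left_ideal (maxRI :: 'a set)"
    and act: "is_act act A"
    and maxB: "maximal_subact act B A"
    and a: "\<exists>a\<in>A - B. maxRI = {s. act a s \<in> B}"
  shows "(\<forall>I. right_ideal I \<and> I \<noteq> UNIV \<and> ideal_sq I = I \<longrightarrow> \<not> act_iso act (act_ideal act A I) A)
    \<and> (\<forall>I. right_ideal I \<longrightarrow> (act_ideal act A I = A \<longleftrightarrow> I = UNIV))
    \<and> (\<forall>I. right_ideal I \<and> ideal_sq I = I \<longrightarrow> (act_iso act (act_ideal act A I) A \<longleftrightarrow> I = UNIV))"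
proof -
  obtain a where aA: "a \<in> A" and aB: "a \<notin> B" and aM: "maxRI = {s. act a s \<in> B}" using a by blast
  have cl: "\<And>x s. x \<in> A \<Longrightarrow> act x s \<in> A" and one: "\<And>x. x \<in> A \<Longrightarrow> act x 1 = x"
    and assoc: "\<And>x s t. x \<in> A \<Longrightarrow> act x (s * t) = act (act x s) t"
    using act unfolding is_act_def by auto
  have subB: "subact act B A" and BA: "B \<noteq> A"
    and maxi: "\<And>C. subact act C A \<Longrightarrow> C \<noteq> A \<Longrightarrow> B \<subseteq> C \<Longrightarrow> C = B"
    using maxB unfolding maximal_subact_def by auto
  have Bcl: "\<And>b s. b \<in> B \<Longrightarrow> act b s \<in> B" and BsA: "B \<subseteq> A" using subB unfolding subact_def by auto
  define C where "C = B \<union> {act a t | t. True}"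
  have "subact act C A" unfolding subact_def C_def
  proof (intro conjI)
    show "B \<union> {act a t |t. True} \<noteq> {}" by blast
    show "B \<union> {act a t |t. True} \<subseteq> A" using BsA cl aA by auto
    show "\<forall>b\<in>B \<union> {act a t |t. True}. \<forall>s. act b s \<in> B \<union> {act a t |t. True}"
      using Bcl assoc aA by (auto, metis)
  qed
  moreover have "C \<noteq> B" using aB one[OF aA] unfolding C_def by (metis (mono_tags, lifting) Un_iff mem_Collect_eq)
  ultimately have CA: "C = A" using maxi unfolding C_def by blast
  have Mleft: "\<And>s t::'a. s \<in> maxRI \<Longrightarrow> t * s \<in> maxRI" using twosided unfolding left_ideal_def by blast
  have AM: "\<And>x s. x \<in> A \<Longrightarrow> s \<in> maxRI \<Longrightarrow> act x s \<in> B"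
  proof -
    fix x and s :: 'a assume x: "x \<in> A" and s: "s \<in> maxRI"
    from x CA have "x \<in> B \<or> (\<exists>t. x = act a t)" unfolding C_def by blast
    then show "act x s \<in> B"
    proof
      assume "x \<in> B" thus ?thesis using Bcl by blast
    next
      assume "\<exists>t. x = act a t"
      then obtain t where "x = act a t" by blast
      hence "act x s = act a (t * s)" using assoc aA by simp
      moreover have "t * s \<in> (maxRI::'a set)" using Mleft s by blast
      hence "t * s \<in> {s. act a s \<in> B}" using aM by simp
      ultimately show ?thesis by simp
    qed
  qed
  have propI: "\<And>I::'a set. right_ideal I \<Longrightarrow> I \<noteq> UNIV \<Longrightarrow> I \<subseteq> maxRI"
  proof
    fix I :: "'a set" and s assume I: "right_ideal I" "I \<noteq> UNIV" "s \<in> I"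
    show "s \<in> maxRI" unfolding maxRI_def
    proof (rule ccontr)
      assume "s \<notin> {s. \<forall>t. s * t \<noteq> 1}"
      then obtain t where "s * t = 1" by auto
      hence "1 \<in> I" using I unfolding right_ideal_def by metis
      hence "\<forall>u. u \<in> I" using I unfolding right_ideal_def by (metis mult_1)
      thus False using I by blast
    qed
  qed
  have univ: "act_ideal act A (UNIV::'a set) = A"
  proof
    show "act_ideal act A (UNIV::'a set) \<subseteq> A" unfolding act_ideal_def using cl by blast
    show "A \<subseteq> act_ideal act A (UNIV::'a set)" unfolding act_ideal_def 
    proof
      fix x assume "x \<in> A"
      hence "x = act x 1" using one by simp
      thus "x \<in> {act a s |a s. a \<in> A \<and> s \<in> (UNIV::'a set)}" using \<open>x \<in> A\<close> by blast
    qed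
  qed
  have part2: "\<And>I::'a set. right_ideal I \<Longrightarrow> (act_ideal act A I = A \<longleftrightarrow> I = UNIV)"
  proof
    fix I :: "'a set" assume I: "right_ideal I" "act_ideal act A I = A"
    show "I = UNIV"
    proof (rule ccontr)
      assume "I \<noteq> UNIV"
      hence "I \<subseteq> maxRI" using propI I by blast
      hence "act_ideal act A I \<subseteq> B" unfolding act_ideal_def using AM by blast
      thus False using I aA aB by blast
    qed
  qed (use univ in simp)
  have part1: "\<And>I::'a set. right_ideal I \<Longrightarrow> I \<noteq> UNIV \<Longrightarrow> ideal_sq I = I \<Longrightarrow> \<not> act_iso act (act_ideal act A I) A"
  proof
    fix I :: "'a set" assume I: "right_ideal I" "I \<noteq> UNIV" "ideal_sq I = I"
      and iso: "act_iso act (act_ideal act A I) A"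
    then obtain f where bij: "bij_betw f (act_ideal act A I) A"
      and hom: "\<forall>x\<in>act_ideal act A I. \<forall>s. f (act x s) = act (f x) s"
      unfolding act_iso_def by blast
    let ?X = "act_ideal act A I"
    have XX: "act_ideal act ?X I = ?X"
    proof
      show "act_ideal act ?X I \<subseteq> ?X"
      proof
        fix y assume "y \<in> act_ideal act ?X I"
        then obtain x s t where "x \<in> A" "s \<in> I" "t \<in> I" "y = act (act x s) t"
          unfolding act_ideal_def by blast
        moreover have "s * t \<in> I" using \<open>s \<in> I\<close> I(1) unfolding right_ideal_def by blast
        ultimately show "y \<in> ?X" unfolding act_ideal_def using assoc by (metis (mono_tags, lifting) mem_Collect_eq)
      qed
    next
      show "?X \<subseteq> act_ideal act ?X I"
      proof
        fix y assume "y \<in> ?X"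
        then obtain x u where xu: "x \<in> A" "u \<in> I" "y = act x u" unfolding act_ideal_def by blast
        then obtain s t where "s \<in> I" "t \<in> I" "u = s * t" using I(3) unfolding ideal_sq_def by blast
        hence "y = act (act x s) t" "act x s \<in> ?X" using xu assoc unfolding act_ideal_def by auto
        thus "y \<in> act_ideal act ?X I" using \<open>t \<in> I\<close> unfolding act_ideal_def by blast
      qed
    qed
    have "f ` act_ideal act ?X I = act_ideal act A I"
    proof
      show "f ` act_ideal act ?X I \<subseteq> act_ideal act A I"
      proof
        fix z assume "z \<in> f ` act_ideal act ?X I"
        then obtain x s where "x \<in> ?X" "s \<in> I" "z = f (act x s)" unfolding act_ideal_def by blast
        hence "z = act (f x) s" "f x \<in> A" using hom bij bij_betw_apply by fastforce+
        thus "z \<in> act_ideal act A I" using \<open>s \<in> I\<close> unfolding act_ideal_def by blast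
      qed
    next
      show "act_ideal act A I \<subseteq> f ` act_ideal act ?X I"
      proof
        fix z assume "z \<in> act_ideal act A I"
        then obtain y s where y: "y \<in> A" "s \<in> I" "z = act y s" unfolding act_ideal_def by blast
        then obtain x where x: "x \<in> ?X" "y = f x" using bij unfolding bij_betw_def by blast
        hence "z = f (act x s)" using hom y by simp
        moreover have "act x s \<in> act_ideal act ?X I" using x y unfolding act_ideal_def by blast
        ultimately show "z \<in> f ` act_ideal act ?X I" by blast
      qed
    qed
    hence "f ` ?X = ?X" using XX by simp
    moreover have "f ` ?X = A" using bij unfolding bij_betw_def by blast
    ultimately have "?X = A" by simp
    thus False using part2 I by blast
  qed
  have part3: "\<And>I::'a set. right_ideal I \<Longrightarrow> ideal_sq I = I \<Longrightarrow> (act_iso act (act_ideal act A I) A \<longleftrightarrow> I = UNIV)"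
  proof -
    fix I :: "'a set" assume I: "right_ideal I" "ideal_sq I = I"
    have "act_iso act A A" unfolding act_iso_def by (rule exI[of _ id]) simp
    show "act_iso act (act_ideal act A I) A \<longleftrightarrow> I = UNIV"
    proof (cases "I = UNIV")
      case True
      thus ?thesis using univ \<open>act_iso act A A\<close> by simp
    next
      case False
      thus ?thesis using part1 I by blast
    qed
  qed
  show ?thesis using part1 part2 part3 by blast
qed

end
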